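(* Let $(\Omega,\mathcal A)$ be a measurable space admitting a universally consistent learning rule $\mathcal L$. Then for every subset $Y\subseteq\Omega$, the restriction $\mathcal L|_Y$ is a universally consistent learning rule for the measurable subspace $(Y,\mathcal A|_Y)$, where $\mathcal A|_Y=\{A\cap Y: A\in\mathcal A\}$.
   Context: For a measurable space $(\Omega,\mathcal A)$, give $\Omega\times\{0,1\}$ the product $\sigma$-algebra. A classifier is a measurable map $T:\Omega\to\{0,1\}$. A learning rule $\mathcal L$ is a family of maps $\mathcal L_n:\Omega^n\times\{0,1\}^n\times\Omega\to\{0,1\}$, $(\sigma,x)\mapsto\mathcal L_n(\sigma)(x)$, $n\ge1$, each measurable with respect to the product $\sigma$-algebra. For a probability measure $\tilde\mu$ on $\Omega\times\{0,1\}$, $\mathrm{err}_{\tilde\mu}(\mathcal L_n)=(\tilde\mu^n\otimes\tilde\mu)\{(\sigma,x,y):\mathcal L_n(\sigma)(x)\ne y\}$, and the Bayes error is $\ell^*(\tilde\mu)=\inf_T\tilde\mu\{(x,y):T(x)\ne y\}$ over all classifiers $T$. $\mathcal L$ is universally consistent if $\mathrm{err}_{\tilde\mu}(\mathcal L_n)\to\ell^*(\tilde\mu)$ as $n\to\infty$ for every probability measure $\tilde\mu$ on $\Omega\times\{0,1\}$. The restriction $\mathcal L|_Y$ is defined by $(\mathcal L|_Y)_n=\mathcal L_n|_{Y^n\times\{0,1\}^n\times Y}$. *)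

theory Defs
  imports "HOL-Probability.Probability"
begin

text \<open>Labels {0,1} are encoded as bool. A labelled point is an element of
  'a \<times> bool; the label space carries the discrete sigma algebra.\<close>

definition labelled :: "'a measure \<Rightarrow> ('a \<times> bool) measure" where
  "labelled M = M \<Otimes>\<^sub>M count_space UNIV"

text \<open>A sample of size n is an element of (\<Omega> \<times> {0,1})^n, encoded as a
  function on {..<n}.\<close>
definition sample_space :: "'a measure \<Rightarrow> nat \<Rightarrow> (nat \<Rightarrow> 'a \<times> bool) measure" where
  "sample_space M n = PiM {..<n} (\<lambda>_. labelled M)"

definition learning_rule ::
  "'a measure \<Rightarrow> (nat \<Rightarrow> (nat \<Rightarrow> 'a \<times> bool) \<Rightarrow> 'a \<Rightarrow> bool) \<Rightarrow> bool" where
  "learning_rule M L \<longleftrightarrow>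
     (\<forall>n\<ge>1. (\<lambda>(\<sigma>, x). L n \<sigma> x) \<in> measurable (sample_space M n \<Otimes>\<^sub>M M) (count_space UNIV))"

definition is_label_prob :: "'a measure \<Rightarrow> ('a \<times> bool) measure \<Rightarrow> bool" where
  "is_label_prob M \<mu> \<longleftrightarrow> prob_space \<mu> \<and> sets \<mu> = sets (labelled M)"

definition err ::
  "('a \<times> bool) measure \<Rightarrow> (nat \<Rightarrow> (nat \<Rightarrow> 'a \<times> bool) \<Rightarrow> 'a \<Rightarrow> bool) \<Rightarrow> nat \<Rightarrow> real" where
  "err \<mu> L n = measure (PiM {..<n} (\<lambda>_. \<mu>) \<Otimes>\<^sub>M \<mu>)
     ({(\<sigma>, (x, y)). L n \<sigma> x \<noteq> y} \<inter> space (PiM {..<n} (\<lambda>_. \<mu>) \<Otimes>\<^sub>M \<mu>))"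

definition classifier :: "'a measure \<Rightarrow> ('a \<Rightarrow> bool) \<Rightarrow> bool" where
  "classifier M T \<longleftrightarrow> T \<in> measurable M (count_space UNIV)"

definition bayes_error :: "'a measure \<Rightarrow> ('a \<times> bool) measure \<Rightarrow> real" where
  "bayes_error M \<mu> = (INF T\<in>{T. classifier M T}. measure \<mu> ({(x, y). T x \<noteq> y} \<inter> space \<mu>))"

definition universally_consistent ::
  "'a measure \<Rightarrow> (nat \<Rightarrow> (nat \<Rightarrow> 'a \<times> bool) \<Rightarrow> 'a \<Rightarrow> bool) \<Rightarrow> bool" where
  "universally_consistent M L \<longleftrightarrow> learning_rule M L \<and>
     (\<forall>\<mu>. is_label_prob M \<mu> \<longrightarrow> (\<lambda>n. err \<mu> L n) \<longlonglongrightarrow> bayes_error M \<mu>)"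

end

theory Submission
  imports Defs
begin

lemma incl_meas:
  assumes "Y \<subseteq> space M"
  shows "(\<lambda>z. z) \<in> labelled (restrict_space M Y) \<rightarrow>\<^sub>M labelled M"
proof -
  have i: "(\<lambda>x. x) \<in> restrict_space M Y \<rightarrow>\<^sub>M M"
    by (rule measurable_restrict_space1) simp
  have "(\<lambda>z. (fst z, snd z)) \<in> restrict_space M Y \<Otimes>\<^sub>M count_space UNIV \<rightarrow>\<^sub>M M \<Otimes>\<^sub>M count_space UNIV"
    by (rule measurable_Pair[OF measurable_compose[OF measurable_fst i] measurable_snd])
  then show ?thesis by (simp add: labelled_def)
qed

lemma err_eq:
  assumes Y: "Y \<subseteq> space M" and mu: "is_label_prob (restrict_space M Y) \<mu>"
    and n: "n \<ge> 1" and lr: "learning_rule M L"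
  shows "err (distr \<mu> (labelled M) (\<lambda>z. z)) L n = err \<mu> L n"
proof -
  interpret mu: prob_space \<mu> using mu by (simp add: is_label_prob_def)
  have sm: "sets \<mu> = sets (labelled (restrict_space M Y))" using mu by (simp add: is_label_prob_def)
  have idm: "(\<lambda>z. z) \<in> \<mu> \<rightarrow>\<^sub>M labelled M"
    using incl_meas[OF Y] measurable_cong_sets[OF sm refl] by blast
  define \<nu> where "\<nu> = distr \<mu> (labelled M) (\<lambda>z. z)"
  have pnu: "prob_space \<nu>" unfolding \<nu>_def by (rule mu.prob_space_distr[OF idm])
  define P where "P = PiM {..<n} (\<lambda>_. \<mu>)"
  define PM where "PM = PiM {..<n} (\<lambda>_. \<nu>)"
  have snu: "sets \<nu> = sets (labelled M)" unfolding \<nu>_def by simp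
  have idn: "(\<lambda>z. z) \<in> \<mu> \<rightarrow>\<^sub>M \<nu>"
    using idm measurable_cong_sets[OF refl snu] by blast
  have dnu: "distr \<mu> \<nu> (\<lambda>z. z) = \<nu>"
    unfolding \<nu>_def by (rule distr_cong) (auto simp: \<nu>_def)
  have Q: "PM = distr P PM (compose {..<n} (\<lambda>z. z))"
    unfolding P_def PM_def
    using distr_PiM_finite_prob_space'[of "{..<n}" "\<lambda>_. \<mu>" "\<lambda>_. \<nu>" "\<lambda>z. z", OF _ mu.prob_space_axioms pnu idn]
    by (simp add: dnu)
  have cm: "compose {..<n} (\<lambda>z. z) \<in> P \<rightarrow>\<^sub>M PM"
    unfolding P_def PM_def compose_def using idn by measurable
  have sfn: "sigma_finite_measure (distr \<mu> \<nu> (\<lambda>z. z))"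
    unfolding dnu using pnu prob_space_imp_sigma_finite by blast
  define F :: "(nat \<Rightarrow> 'a \<times> bool) \<times> 'a \<times> bool \<Rightarrow> _" where "F = (\<lambda>(x, y). (compose {..<n} (\<lambda>z. z) x, (\<lambda>z. z) y))"
  have QQ: "PM \<Otimes>\<^sub>M \<nu> = distr (P \<Otimes>\<^sub>M \<mu>) (PM \<Otimes>\<^sub>M \<nu>) F"
    using pair_measure_distr[OF cm idn sfn] Q dnu unfolding F_def by simp
  have Fm: "F \<in> P \<Otimes>\<^sub>M \<mu> \<rightarrow>\<^sub>M PM \<Otimes>\<^sub>M \<nu>"
    unfolding F_def using cm idn by measurable
  have g: "(\<lambda>(\<sigma>, x). L n \<sigma> x) \<in> sample_space M n \<Otimes>\<^sub>M M \<rightarrow>\<^sub>M count_space UNIV"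
    using lr n by (simp add: learning_rule_def)
  have sPM: "sets (PM \<Otimes>\<^sub>M \<nu>) = sets (sample_space M n \<Otimes>\<^sub>M (M \<Otimes>\<^sub>M count_space UNIV))"
    unfolding PM_def sample_space_def
    by (intro sets_pair_measure_cong sets_PiM_cong) (auto simp: snu labelled_def)
  have h1: "(\<lambda>p. (fst p, fst (snd p))) \<in> sample_space M n \<Otimes>\<^sub>M (M \<Otimes>\<^sub>M count_space UNIV) \<rightarrow>\<^sub>M sample_space M n \<Otimes>\<^sub>M M"
    by measurable
  have h2: "(\<lambda>p. L n (fst p) (fst (snd p))) \<in> sample_space M n \<Otimes>\<^sub>M (M \<Otimes>\<^sub>M count_space UNIV) \<rightarrow>\<^sub>M count_space UNIV"
    using measurable_compose[OF h1 g] by simp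
  have h3: "(\<lambda>p. L n (fst p) (fst (snd p)) \<noteq> snd (snd p)) \<in> sample_space M n \<Otimes>\<^sub>M (M \<Otimes>\<^sub>M count_space UNIV) \<rightarrow>\<^sub>M count_space UNIV"
    using h2 by measurable
  define E where "E = {(\<sigma>, (x, y)). L n \<sigma> x \<noteq> y}"
  have Es: "E \<inter> space (PM \<Otimes>\<^sub>M \<nu>) \<in> sets (PM \<Otimes>\<^sub>M \<nu>)"
  proof -
    have "E \<inter> space (PM \<Otimes>\<^sub>M \<nu>) = {p \<in> space (PM \<Otimes>\<^sub>M \<nu>). L n (fst p) (fst (snd p)) \<noteq> snd (snd p)}"
      unfolding E_def by auto
    also have "\<dots> \<in> sets (PM \<Otimes>\<^sub>M \<nu>)"
    proof -
      have h4: "(\<lambda>p. L n (fst p) (fst (snd p)) \<noteq> snd (snd p)) \<in> PM \<Otimes>\<^sub>M \<nu> \<rightarrow>\<^sub>M count_space UNIV"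
        using h3 measurable_cong_sets[OF sPM refl] by blast
      then show ?thesis by (simp only: pred_def)
    qed
    finally show ?thesis .
  qed
  have pre: "F -` (E \<inter> space (PM \<Otimes>\<^sub>M \<nu>)) \<inter> space (P \<Otimes>\<^sub>M \<mu>) = E \<inter> space (P \<Otimes>\<^sub>M \<mu>)"
  proof (intro set_eqI iffI)
    fix p assume p: "p \<in> F -` (E \<inter> space (PM \<Otimes>\<^sub>M \<nu>)) \<inter> space (P \<Otimes>\<^sub>M \<mu>)"
    obtain s z where pz: "p = (s, z)" by (cases p)
    have "s \<in> space P" using p pz by (simp add: space_pair_measure)
    then have "compose {..<n} (\<lambda>z. z) s = s"
      unfolding P_def space_PiM compose_def by (simp add: PiE_restrict)
    then have "F p = p" unfolding F_def pz by simp
    then show "p \<in> E \<inter> space (P \<Otimes>\<^sub>M \<mu>)" using p by auto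
  next
    fix p assume p: "p \<in> E \<inter> space (P \<Otimes>\<^sub>M \<mu>)"
    obtain s z where pz: "p = (s, z)" by (cases p)
    have "s \<in> space P" using p pz by (simp add: space_pair_measure)
    then have "compose {..<n} (\<lambda>z. z) s = s"
      unfolding P_def space_PiM compose_def by (simp add: PiE_restrict)
    then have "F p = p" unfolding F_def pz by simp
    moreover have "F p \<in> space (PM \<Otimes>\<^sub>M \<nu>)" using measurable_space[OF Fm] p by blast
    ultimately show "p \<in> F -` (E \<inter> space (PM \<Otimes>\<^sub>M \<nu>)) \<inter> space (P \<Otimes>\<^sub>M \<mu>)" using p by auto
  qed
  have "err \<nu> L n = measure (PM \<Otimes>\<^sub>M \<nu>) (E \<inter> space (PM \<Otimes>\<^sub>M \<nu>))"
    unfolding err_def PM_def E_def by simp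
  also have "\<dots> = measure (distr (P \<Otimes>\<^sub>M \<mu>) (PM \<Otimes>\<^sub>M \<nu>) F) (E \<inter> space (PM \<Otimes>\<^sub>M \<nu>))"
    using QQ by simp
  also have "\<dots> = measure (P \<Otimes>\<^sub>M \<mu>) (E \<inter> space (P \<Otimes>\<^sub>M \<mu>))"
    using measure_distr[OF Fm Es] pre by simp
  also have "\<dots> = err \<mu> L n"
    unfolding err_def P_def E_def by simp
  finally show ?thesis unfolding \<nu>_def .
qed

lemma cls_sets:
  assumes T: "T \<in> N \<rightarrow>\<^sub>M count_space UNIV"
  shows "{(x, y). T x \<noteq> y} \<inter> space (labelled N) \<in> sets (labelled N)"
proof -
  have "(\<lambda>p. T (fst p) \<noteq> snd p) \<in> labelled N \<rightarrow>\<^sub>M count_space UNIV"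
    unfolding labelled_def using T by measurable
  then have "{p \<in> space (labelled N). T (fst p) \<noteq> snd p} \<in> sets (labelled N)"
    by (simp only: pred_def)
  moreover have "{(x, y). T x \<noteq> y} \<inter> space (labelled N) = {p \<in> space (labelled N). T (fst p) \<noteq> snd p}"
    by auto
  ultimately show ?thesis by simp
qed

lemma bayes_eq:
  assumes Y: "Y \<subseteq> space M" and mu: "is_label_prob (restrict_space M Y) \<mu>"
  shows "bayes_error M (distr \<mu> (labelled M) (\<lambda>z. z)) = bayes_error (restrict_space M Y) \<mu>"
proof -
  have sm: "sets \<mu> = sets (labelled (restrict_space M Y))" using mu by (simp add: is_label_prob_def)
  have spm: "space \<mu> = Y \<times> UNIV"
    using sets_eq_imp_space_eq[OF sm] Y
    by (auto simp: labelled_def space_pair_measure space_restrict_space)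
  have idm: "(\<lambda>z. z) \<in> \<mu> \<rightarrow>\<^sub>M labelled M"
    using incl_meas[OF Y] measurable_cong_sets[OF sm refl] by blast
  define \<nu> where "\<nu> = distr \<mu> (labelled M) (\<lambda>z. z)"
  have snu: "space \<nu> = space (labelled M)" unfolding \<nu>_def by simp
  have sub: "space \<mu> \<subseteq> space \<nu>" using measurable_space[OF idm] snu by auto
  have eqT: "measure \<nu> ({(x, y). T x \<noteq> y} \<inter> space \<nu>) = measure \<mu> ({(x, y). T x \<noteq> y} \<inter> space \<mu>)"
    if T: "classifier M T" for T
  proof -
    have "{(x, y). T x \<noteq> y} \<inter> space (labelled M) \<in> sets (labelled M)"
      using T by (intro cls_sets) (simp add: classifier_def)
    then have "measure \<nu> ({(x, y). T x \<noteq> y} \<inter> space \<nu>) =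
        measure \<mu> ((\<lambda>z. z) -` ({(x, y). T x \<noteq> y} \<inter> space \<nu>) \<inter> space \<mu>)"
      unfolding \<nu>_def by (simp add: measure_distr[OF idm])
    also have "(\<lambda>z. z) -` ({(x, y). T x \<noteq> y} \<inter> space \<nu>) \<inter> space \<mu> = {(x, y). T x \<noteq> y} \<inter> space \<mu>"
      using sub by auto
    finally show ?thesis .
  qed
  have "(\<lambda>T. measure \<nu> ({(x, y). T x \<noteq> y} \<inter> space \<nu>)) ` {T. classifier M T} =
        (\<lambda>T. measure \<mu> ({(x, y). T x \<noteq> y} \<inter> space \<mu>)) ` {T. classifier (restrict_space M Y) T}"
  proof (intro set_eqI iffI)
    fix r assume "r \<in> (\<lambda>T. measure \<nu> ({(x, y). T x \<noteq> y} \<inter> space \<nu>)) ` {T. classifier M T}"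
    then obtain T where T: "classifier M T" and r: "r = measure \<nu> ({(x, y). T x \<noteq> y} \<inter> space \<nu>)" by auto
    have "classifier (restrict_space M Y) T"
      using T by (simp add: classifier_def measurable_restrict_space1)
    then show "r \<in> (\<lambda>T. measure \<mu> ({(x, y). T x \<noteq> y} \<inter> space \<mu>)) ` {T. classifier (restrict_space M Y) T}"
      using eqT[OF T] r by auto
  next
    fix r assume "r \<in> (\<lambda>T. measure \<mu> ({(x, y). T x \<noteq> y} \<inter> space \<mu>)) ` {T. classifier (restrict_space M Y) T}"
    then obtain T where T: "classifier (restrict_space M Y) T"
      and r: "r = measure \<mu> ({(x, y). T x \<noteq> y} \<inter> space \<mu>)" by auto
    have "T -` {True} \<inter> space (restrict_space M Y) \<in> sets (restrict_space M Y)"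
      using T by (simp add: classifier_def measurable_sets)
    then obtain A where A: "A \<in> sets M" and TA: "T -` {True} \<inter> space (restrict_space M Y) = Y \<inter> A"
      by (auto simp: sets_restrict_space)
    define T' where "T' = (\<lambda>x. x \<in> A)"
    have T': "classifier M T'" unfolding classifier_def T'_def using A by measurable
    have agree: "T' x = T x" if "x \<in> Y" for x
      using TA that Y unfolding T'_def by (auto simp: space_restrict_space)
    have "{(x, y). T' x \<noteq> y} \<inter> space \<mu> = {(x, y). T x \<noteq> y} \<inter> space \<mu>"
      using agree spm by auto
    then have "r = measure \<nu> ({(x, y). T' x \<noteq> y} \<inter> space \<nu>)" using eqT[OF T'] r by simp
    then show "r \<in> (\<lambda>T. measure \<nu> ({(x, y). T x \<noteq> y} \<inter> space \<nu>)) ` {T. classifier M T}"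
      using T' by auto
  qed
  then show ?thesis unfolding bayes_error_def \<nu>_def by simp
qed

theorem mainTheorem3:
  fixes M :: "'a measure" and L :: "nat \<Rightarrow> (nat \<Rightarrow> 'a \<times> bool) \<Rightarrow> 'a \<Rightarrow> bool"
    and Y :: "'a set"
  assumes "universally_consistent M L"
    and "Y \<subseteq> space M"
  shows "universally_consistent (restrict_space M Y) L"
proof -
  note Y = assms(2)
  have lr: "learning_rule M L" and uc: "\<And>\<mu>. is_label_prob M \<mu> \<Longrightarrow> (\<lambda>n. err \<mu> L n) \<longlonglongrightarrow> bayes_error M \<mu>"
    using assms(1) by (auto simp: universally_consistent_def)
  have inc: "(\<lambda>z. z) \<in> labelled (restrict_space M Y) \<rightarrow>\<^sub>M labelled M" by (rule incl_meas[OF Y])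
  have "learning_rule (restrict_space M Y) L"
    unfolding learning_rule_def
  proof (intro allI impI)
    fix n :: nat assume n: "n \<ge> 1"
    have g: "(\<lambda>(\<sigma>, x). L n \<sigma> x) \<in> sample_space M n \<Otimes>\<^sub>M M \<rightarrow>\<^sub>M count_space UNIV"
      using lr n by (simp add: learning_rule_def)
    have ss: "space (labelled (restrict_space M Y)) \<subseteq> space (labelled M)"
      using measurable_space[OF inc] by blast
    have ssP: "\<omega> \<in> (\<Pi>\<^sub>E i\<in>{..<n}. space (labelled M))"
      if w: "\<omega> \<in> space (PiM {..<n} (\<lambda>_. labelled (restrict_space M Y)))" for \<omega>
      using w ss unfolding space_PiM PiE_iff by blast
    have p1: "(\<lambda>\<omega>. \<omega>) \<in> sample_space (restrict_space M Y) n \<rightarrow>\<^sub>M sample_space M n"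
      unfolding sample_space_def
    proof (rule measurable_PiM_single'[of "{..<n}" "\<lambda>i \<omega>. \<omega> i", simplified])
      fix i :: nat assume "i < n"
      show "(\<lambda>\<omega>. \<omega> i) \<in> PiM {..<n} (\<lambda>_. labelled (restrict_space M Y)) \<rightarrow>\<^sub>M labelled M"
        using measurable_compose[OF measurable_component_singleton[of i "{..<n}" "\<lambda>_. labelled (restrict_space M Y)"] inc] \<open>i < n\<close> by simp
    qed (use ssP in auto)
    have p2: "(\<lambda>x. x) \<in> restrict_space M Y \<rightarrow>\<^sub>M M"
      by (rule measurable_restrict_space1) simp
    have "(\<lambda>p. (fst p, snd p)) \<in> sample_space (restrict_space M Y) n \<Otimes>\<^sub>M restrict_space M Y \<rightarrow>\<^sub>M sample_space M n \<Otimes>\<^sub>M M"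
      by (rule measurable_Pair[OF measurable_compose[OF measurable_fst p1] measurable_compose[OF measurable_snd p2]])
    from measurable_compose[OF this g]
    show "(\<lambda>(\<sigma>, x). L n \<sigma> x) \<in> sample_space (restrict_space M Y) n \<Otimes>\<^sub>M restrict_space M Y \<rightarrow>\<^sub>M count_space UNIV"
      by simp
  qed
  moreover have "(\<lambda>n. err \<mu> L n) \<longlonglongrightarrow> bayes_error (restrict_space M Y) \<mu>"
    if mu: "is_label_prob (restrict_space M Y) \<mu>" for \<mu>
  proof -
    interpret mu: prob_space \<mu> using mu by (simp add: is_label_prob_def)
    have sm: "sets \<mu> = sets (labelled (restrict_space M Y))" using mu by (simp add: is_label_prob_def)
    have idm: "(\<lambda>z. z) \<in> \<mu> \<rightarrow>\<^sub>M labelled M"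
      using inc measurable_cong_sets[OF sm refl] by blast
    have lp: "is_label_prob M (distr \<mu> (labelled M) (\<lambda>z. z))"
      unfolding is_label_prob_def using mu.prob_space_distr[OF idm] by simp
    have "(\<lambda>n. err (distr \<mu> (labelled M) (\<lambda>z. z)) L n) \<longlonglongrightarrow> bayes_error (restrict_space M Y) \<mu>"
      using uc[OF lp] bayes_eq[OF Y mu] by simp
    moreover have "eventually (\<lambda>n. err (distr \<mu> (labelled M) (\<lambda>z. z)) L n = err \<mu> L n) sequentially"
      using err_eq[OF Y mu _ lr] unfolding eventually_sequentially by blast
    ultimately show ?thesis by (rule Lim_transform_eventually)
  qed
  ultimately show ?thesis by (simp add: universally_consistent_def)
qed

end
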